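(* Let $l\in\mathbb{Z}_{\geq 2}\cup\{\infty\}$, let $k\geq 0$ be an integer and $m\in\mathbb{Z}_{\geq1}\cup\{\infty\}$ with $2k<m$. Then the connected components containing the identity of the subsets $\{(n,f) : |n|<k/2\}$ of the Cayley graphs of the marked groups $\Gamma(k,l,m)$ and $\Gamma(0,2,\infty)$ coincide (i.e. are isomorphic as labelled graphs by an isomorphism preserving the identity and the generator labels). In particular, the marked balls of radius $\frac{k-1}{2}$ in these two marked groups coincide.
   Context: For $l\in\mathbb{Z}_{\geq1}\cup\{\infty\}$, $D_l=\langle a,b\mid a^2=b^2=(ab)^l=1\rangle$ is the dihedral group of order $2l$. For groups $B,L$, the wreath product $B\wr L=B\ltimes\bigoplus_B L$ has elements $(g,f)$ with $g\in B$ and $f:B\to L$ finitely supported, $B$ acting by shift; $\mathbb{1}$ is the identically trivial function and $c\,\delta_g$ the function equal to $c$ at $g$ and trivial elsewhere. For integers $k\geq0$ and $l,m\in\mathbb{Z}_{\geq1}\cup\{\infty\}$ (with $\mathbb{Z}/\infty\mathbb{Z}=\mathbb{Z}$), $\Gamma(k,l,m)$ denotes the group $\mathbb{Z}/m\mathbb{Z}\wr D_l$ marked by the ordered generating set $\tau=(+1,\mathbb{1})$, $\alpha=(0,a\delta_0)$, $\beta=(0,b\delta_k)$. The Cayley graphs are taken with respect to these marked generators. Marked balls of radius $R$ in two marked groups coincide if for every word $w$ of length at most $2R$ in the free group on three letters, $w$ evaluates to the identity in one group iff it does in the other. *)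

theory Defs
  imports Main "HOL-Library.Extended_Nat"
begin

text \<open>An element m of Z_{>=1} \<union> {\<infinity>} is an enat; Z/mZ is modelled by the integers
  reduced modulo emod m, where emod \<infinity> = 0 (and x mod 0 = x, so Z/\<infinity>Z = Z).\<close>

definition emod :: "enat \<Rightarrow> int" where
  "emod m = (case m of enat n \<Rightarrow> int n | \<infinity> \<Rightarrow> 0)"

definition zabs :: "int \<Rightarrow> int \<Rightarrow> int" where
  "zabs M n = (if M = 0 then \<bar>n\<bar> else min (n mod M) (M - n mod M))"

text \<open>(r, s) stands for rho^r sigma^s with sigma rho sigma = rho^-1, r taken mod L = emod l.
  Generators a = sigma, b = rho sigma; then a^2 = b^2 = 1 and ab = rho^-1 has order l.\<close>

type_synonym dih = "int \<times> bool"

definition dih_one :: dih where "dih_one = (0, False)"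

definition dih_mul :: "int \<Rightarrow> dih \<Rightarrow> dih \<Rightarrow> dih" where
  "dih_mul L x y = ((fst x + (if snd x then - fst y else fst y)) mod L, snd x \<noteq> snd y)"

definition dih_inv :: "int \<Rightarrow> dih \<Rightarrow> dih" where
  "dih_inv L x = (if snd x then (fst x mod L, True) else ((- fst x) mod L, False))"

definition dih_a :: dih where "dih_a = (0, True)"

definition dih_b :: "int \<Rightarrow> dih" where "dih_b L = (1 mod L, True)"

type_synonym lamp = "int \<times> (int \<Rightarrow> dih)"

definition wr_carrier :: "int \<Rightarrow> int \<Rightarrow> lamp set" where
  "wr_carrier M L = {u. fst u mod M = fst u
      \<and> (\<forall>x. fst (snd u x) mod L = fst (snd u x))
      \<and> (\<forall>x. x mod M \<noteq> x \<longrightarrow> snd u x = dih_one)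
      \<and> finite {x. snd u x \<noteq> dih_one}}"

definition wr_one :: lamp where "wr_one = (0, \<lambda>x. dih_one)"

definition wr_mul :: "int \<Rightarrow> int \<Rightarrow> lamp \<Rightarrow> lamp \<Rightarrow> lamp" where
  "wr_mul M L u v = ((fst u + fst v) mod M,
      \<lambda>x. if x mod M = x then dih_mul L (snd u x) (snd v ((x - fst u) mod M)) else dih_one)"

definition wr_inv :: "int \<Rightarrow> int \<Rightarrow> lamp \<Rightarrow> lamp" where
  "wr_inv M L u = ((- fst u) mod M,
      \<lambda>x. if x mod M = x then dih_inv L (snd u ((x + fst u) mod M)) else dih_one)"

datatype gen = Tau | Alpha | Beta

definition Gamma_carrier :: "enat \<Rightarrow> enat \<Rightarrow> lamp set" where
  "Gamma_carrier l m = wr_carrier (emod m) (emod l)"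

definition Gamma_mul :: "enat \<Rightarrow> enat \<Rightarrow> lamp \<Rightarrow> lamp \<Rightarrow> lamp" where
  "Gamma_mul l m = wr_mul (emod m) (emod l)"

definition Gamma_inv :: "enat \<Rightarrow> enat \<Rightarrow> lamp \<Rightarrow> lamp" where
  "Gamma_inv l m = wr_inv (emod m) (emod l)"

definition Gamma_gen :: "nat \<Rightarrow> enat \<Rightarrow> enat \<Rightarrow> gen \<Rightarrow> lamp" where
  "Gamma_gen k l m s = (case s of
      Tau \<Rightarrow> (1 mod emod m, \<lambda>x. dih_one)
    | Alpha \<Rightarrow> (0, (\<lambda>x. dih_one)(0 := dih_a))
    | Beta \<Rightarrow> (0, (\<lambda>x. dih_one)(int k mod emod m := dih_b (emod l))))"

text \<open>Words in the free group on tau, alpha, beta: letters (s, True) mean s^-1.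
  Evaluation multiplies left to right.\<close>
definition Gamma_word :: "nat \<Rightarrow> enat \<Rightarrow> enat \<Rightarrow> (gen \<times> bool) list \<Rightarrow> lamp" where
  "Gamma_word k l m w = foldl (\<lambda>g x. Gamma_mul l m g
      (if snd x then Gamma_inv l m (Gamma_gen k l m (fst x)) else Gamma_gen k l m (fst x))) wr_one w"

definition band :: "nat \<Rightarrow> enat \<Rightarrow> enat \<Rightarrow> lamp set" where
  "band K l m = {u \<in> Gamma_carrier l m. 2 * zabs (emod m) (fst u) < int K}"

definition band_adj :: "nat \<Rightarrow> nat \<Rightarrow> enat \<Rightarrow> enat \<Rightarrow> (lamp \<times> lamp) set" where
  "band_adj K k l m = {(g, h). g \<in> band K l m \<and> h \<in> band K l m \<and>
      (\<exists>s. h = Gamma_mul l m g (Gamma_gen k l m s) \<or> g = Gamma_mul l m h (Gamma_gen k l m s))}"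

definition ident_comp :: "nat \<Rightarrow> nat \<Rightarrow> enat \<Rightarrow> enat \<Rightarrow> lamp set" where
  "ident_comp K k l m = {h \<in> band K l m. (wr_one, h) \<in> (band_adj K k l m)\<^sup>*}"

end

theory Submission
  imports Defs
begin


lemma carrierD:
  assumes "u \<in> wr_carrier M L"
  shows "fst u mod M = fst u" "fst (snd u x) mod L = fst (snd u x)"
        "x mod M \<noteq> x \<Longrightarrow> snd u x = dih_one" "finite {x. snd u x \<noteq> dih_one}"
  using assms by (auto simp: wr_carrier_def)

lemma dih_mul_one: "fst y mod L = fst y \<Longrightarrow> dih_mul L y dih_one = y"
  by (cases y) (simp add: dih_mul_def dih_one_def)

lemma mul_tau:
  assumes "z \<in> wr_carrier M L"
  shows "wr_mul M L z (1 mod M, \<lambda>x. dih_one) = ((fst z + 1) mod M, snd z)"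
  using carrierD[OF assms]
  by (auto simp: wr_mul_def mod_add_right_eq dih_mul_one intro!: ext)

lemma mul_taui:
  assumes "z \<in> wr_carrier M L"
  shows "wr_mul M L z (wr_inv M L (1 mod M, \<lambda>x. dih_one)) = ((fst z - 1) mod M, snd z)"
proof -
  have "dih_inv L dih_one = dih_one" by (simp add: dih_inv_def dih_one_def)
  then have "wr_inv M L (1 mod M, \<lambda>x. dih_one) = ((- (1 mod M)) mod M, \<lambda>x. dih_one)"
    by (auto simp: wr_inv_def)
  moreover have "(fst z + (- (1 mod M)) mod M) mod M = (fst z - 1) mod M"
    by (metis diff_conv_add_uminus mod_add_right_eq mod_diff_right_eq)
  ultimately show ?thesis using carrierD[OF assms]
    by (auto simp: wr_mul_def dih_mul_one intro!: ext)
qed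

lemma pos_iff:
  fixes x a q M :: int
  assumes "x mod M = x"
  shows "((x - a) mod M = q mod M) \<longleftrightarrow> x = (a + q) mod M"
proof -
  have "((x - a) mod M = q mod M) \<longleftrightarrow> M dvd (x - a - q)" by (rule mod_eq_dvd_iff)
  also have "\<dots> \<longleftrightarrow> x mod M = (a + q) mod M" by (simp add: mod_eq_dvd_iff algebra_simps)
  finally show ?thesis using assms by (metis mod_mod_trivial)
qed

lemma mul_point:
  assumes "z \<in> wr_carrier M L" "q mod M = q"
  shows "wr_mul M L z (0, (\<lambda>x. dih_one)(q := c)) =
     (fst z, (snd z)((fst z + q) mod M := dih_mul L (snd z ((fst z + q) mod M)) c))"
proof -
  note cz = carrierD[OF assms(1)]
  have key: "x mod M = x \<Longrightarrow> ((x - fst z) mod M = q) \<longleftrightarrow> x = (fst z + q) mod M" for x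
    using pos_iff[of x M "fst z" q] assms(2) by simp
  show ?thesis
    apply (simp add: wr_mul_def cz(1))
    apply (rule ext)
    using key cz dih_mul_one by (auto simp: dih_mul_one)
qed

lemma inv_point:
  assumes "q mod M = q"
  shows "wr_inv M L (0, (\<lambda>x. dih_one)(q := c)) = (0, (\<lambda>x. dih_one)(q := dih_inv L c))"
proof -
  have "dih_inv L dih_one = dih_one" by (simp add: dih_inv_def dih_one_def)
  then show ?thesis using assms by (auto simp: wr_inv_def intro!: ext)
qed




type_synonym st = "int \<times> int set \<times> int set"

definition II :: "nat \<Rightarrow> int set" where "II K = {j. 2 * \<bar>j\<bar> < int K}"

definition pa :: "int \<Rightarrow> int set \<Rightarrow> int \<Rightarrow> bool" where
  "pa M A x = (\<exists>j\<in>A. x = j mod M)"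
definition pb :: "nat \<Rightarrow> int \<Rightarrow> int set \<Rightarrow> int \<Rightarrow> bool" where
  "pb kg M B x = (\<exists>j\<in>B. x = (j + int kg) mod M)"

definition lampv :: "nat \<Rightarrow> int \<Rightarrow> int \<Rightarrow> int set \<Rightarrow> int set \<Rightarrow> int \<Rightarrow> dih" where
  "lampv kg M L A B x = (if x mod M = x then
      (if pb kg M B x then 1 mod L else 0, pa M A x \<noteq> pb kg M B x) else dih_one)"

definition encT :: "nat \<Rightarrow> int \<Rightarrow> int \<Rightarrow> st \<Rightarrow> lamp" where
  "encT kg M L t = (fst t mod M, lampv kg M L (fst (snd t)) (snd (snd t)))"

definition GG :: "nat \<Rightarrow> int \<Rightarrow> int \<Rightarrow> gen \<Rightarrow> lamp" where
  "GG kg M L s = (case s of Tau \<Rightarrow> (1 mod M, \<lambda>x. dih_one)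
    | Alpha \<Rightarrow> (0, (\<lambda>x. dih_one)(0 := dih_a))
    | Beta \<Rightarrow> (0, (\<lambda>x. dih_one)(int kg mod M := dih_b L)))"

lemma Gamma_gen_GG: "Gamma_gen k l m s = GG k (emod m) (emod l) s"
  by (simp add: Gamma_gen_def GG_def)

definition flip :: "int set \<Rightarrow> int \<Rightarrow> int set" where
  "flip A n = (if n \<in> A then A - {n} else insert n A)"

lemma flip_flip[simp]: "flip (flip A n) n = A"
  by (auto simp: flip_def)

lemma finite_flip[simp]: "finite (flip A n) = finite A"
  by (auto simp: flip_def)

lemma enc_carrier:
  assumes "finite A" "finite B"
  shows "encT kg M L (n, A, B) \<in> wr_carrier M L"
proof -
  have "{x. lampv kg M L A B x \<noteq> dih_one} \<subseteq> (\<lambda>j. j mod M) ` A \<union> (\<lambda>j. (j + int kg) mod M) ` B"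
    by (auto simp: lampv_def pa_def pb_def dih_one_def)
  then have "finite {x. lampv kg M L A B x \<noteq> dih_one}"
    using assms by (meson finite_Un finite_imageI finite_subset)
  then show ?thesis
    by (auto simp: wr_carrier_def encT_def lampv_def dih_one_def)
qed

lemma enc_tau:
  assumes "finite A" "finite B"
  shows "wr_mul M L (encT kg M L (n, A, B)) (GG kg M L Tau) = encT kg M L (n + 1, A, B)"
  using mul_tau[OF enc_carrier[OF assms]]
  by (simp add: GG_def encT_def mod_add_left_eq)

lemma enc_taui:
  assumes "finite A" "finite B"
  shows "wr_mul M L (encT kg M L (n, A, B)) (wr_inv M L (GG kg M L Tau)) = encT kg M L (n - 1, A, B)"
  using mul_taui[OF enc_carrier[OF assms]]
  by (simp add: GG_def encT_def mod_diff_left_eq)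

lemma enc_alpha:
  assumes "finite A" "finite B" "\<forall>j\<in>A. j mod M = n mod M \<longrightarrow> j = n"
  shows "wr_mul M L (encT kg M L (n, A, B)) (GG kg M L Alpha) = encT kg M L (n, flip A n, B)"
proof -
  have "wr_mul M L (encT kg M L (n, A, B)) (GG kg M L Alpha)
     = (n mod M, (lampv kg M L A B)(n mod M := dih_mul L (lampv kg M L A B (n mod M)) dih_a))"
    using mul_point[OF enc_carrier[OF assms(1,2)], where q=0 and c=dih_a] 
    by (simp add: GG_def encT_def)
  also have "\<dots> = encT kg M L (n, flip A n, B)"
  proof -
    have pflip: "pa M (flip A n) x = (if x = n mod M then \<not> pa M A x else pa M A x)" for x
      using assms(3) by (auto simp: pa_def flip_def)
    show ?thesis
      unfolding encT_def
      by (auto intro!: ext simp: lampv_def pflip dih_mul_def dih_a_def)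
  qed
  finally show ?thesis .
qed

lemma enc_beta:
  assumes "finite A" "finite B" "\<forall>j\<in>B. (j + int kg) mod M = (n + int kg) mod M \<longrightarrow> j = n"
    "L = 2 \<or> \<not> pa M A ((n + int kg) mod M)"
  shows "wr_mul M L (encT kg M L (n, A, B)) (GG kg M L Beta) = encT kg M L (n, A, flip B n)"
proof -
  have "wr_mul M L (encT kg M L (n, A, B)) (GG kg M L Beta)
     = (n mod M, (lampv kg M L A B)((n + int kg) mod M := dih_mul L (lampv kg M L A B ((n + int kg) mod M)) (dih_b L)))"
    using mul_point[OF enc_carrier[OF assms(1,2)], where q="int kg mod M" and c="dih_b L"] 
    by (simp add: GG_def encT_def mod_add_eq)
  also have "\<dots> = encT kg M L (n, A, flip B n)"
  proof -
    have pflip: "pb kg M (flip B n) x = (if x = (n + int kg) mod M then \<not> pb kg M B x else pb kg M B x)" for x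
      using assms(3) by (auto simp: pb_def flip_def)
    have two: "L = 2 \<Longrightarrow> (1 + 1) mod L = 0" "L = 2 \<Longrightarrow> (-1) mod L = 1 mod L" by auto
    show ?thesis
      unfolding encT_def using assms(4)
      by (auto intro!: ext simp: lampv_def pflip dih_mul_def dih_b_def two)
  qed
  finally show ?thesis .
qed




definition LV :: "nat \<Rightarrow> int \<Rightarrow> int \<Rightarrow> gen \<times> bool \<Rightarrow> lamp" where
  "LV kg M L x = (if snd x then wr_inv M L (GG kg M L (fst x)) else GG kg M L (fst x))"

definition astep :: "gen \<times> bool \<Rightarrow> st \<Rightarrow> st" where
  "astep x t = (case fst x of
      Tau \<Rightarrow> (if snd x then fst t - 1 else fst t + 1, snd t)
    | Alpha \<Rightarrow> (fst t, flip (fst (snd t)) (fst t), snd (snd t))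
    | Beta \<Rightarrow> (fst t, fst (snd t), flip (snd (snd t)) (fst t)))"

definition validT :: "nat \<Rightarrow> st \<Rightarrow> bool" where
  "validT K t = (fst t \<in> II K \<and> fst (snd t) \<subseteq> II K \<and> snd (snd t) \<subseteq> II K)"

definition CC :: "nat \<Rightarrow> nat \<Rightarrow> int \<Rightarrow> int \<Rightarrow> bool" where
  "CC K kg M L = (M \<ge> 0 \<and> 1 mod L \<noteq> 0 \<and> (\<forall>d. \<bar>d\<bar> \<le> int K \<longrightarrow> d mod M = 0 \<longrightarrow> d = 0)
     \<and> (\<forall>n. 2 * \<bar>n\<bar> \<le> int K + 1 \<longrightarrow> zabs M (n mod M) = \<bar>n\<bar>)
     \<and> (L = 2 \<or> (\<forall>j\<in>II K. \<forall>j'\<in>II K. j mod M \<noteq> (j' + int kg) mod M)))"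

lemma finite_II: "finite (II K)"
proof -
  have "II K \<subseteq> {- int K..int K}" by (auto simp: II_def)
  then show ?thesis by (rule finite_subset) simp
qed

lemma modinj:
  assumes "CC K kg M L" "\<bar>a\<bar> + \<bar>b\<bar> \<le> int K" "a mod M = b mod M"
  shows "a = b"
proof -
  have "(a - b) mod M = 0" using assms(3) by (simp add: mod_eq_dvd_iff)
  moreover have "\<bar>a - b\<bar> \<le> int K" using assms(2) by linarith
  moreover have D: "\<forall>d::int. \<bar>d\<bar> \<le> int K \<longrightarrow> d mod M = 0 \<longrightarrow> d = 0"
    using assms(1) unfolding CC_def by (elim conjE)
  ultimately have "a - b = 0" using D[rule_format, of "a - b"] by simp
  then show ?thesis by simp
qed

lemma II_sum: "j \<in> II K \<Longrightarrow> j' \<in> II K \<Longrightarrow> \<bar>j\<bar> + \<bar>j'\<bar> \<le> int K"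
  by (auto simp: II_def)

lemma modinjII: "CC K kg M L \<Longrightarrow> j \<in> II K \<Longrightarrow> j' \<in> II K \<Longrightarrow> j mod M = j' mod M \<Longrightarrow> j = j'"
  using modinj II_sum by blast

lemma inv_GG_Alpha: "wr_inv M L (GG kg M L Alpha) = GG kg M L Alpha"
  using inv_point[of 0 M L dih_a] by (simp add: GG_def dih_inv_def dih_a_def)

lemma inv_GG_Beta: "wr_inv M L (GG kg M L Beta) = GG kg M L Beta"
  using inv_point[of "int kg mod M" M L "dih_b L"] by (simp add: GG_def dih_inv_def dih_b_def)

lemma LET:
  assumes "CC K kg M L" "validT K t"
  shows "wr_mul M L (encT kg M L t) (LV kg M L x) = encT kg M L (astep x t)"
proof -
  obtain n A B where t: "t = (n, A, B)" by (cases t) auto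
  have fin: "finite A" "finite B" using assms(2) finite_II unfolding t validT_def
    by (auto intro: finite_subset)
  have nI: "n \<in> II K" "A \<subseteq> II K" "B \<subseteq> II K" using assms(2) t by (auto simp: validT_def)
  have ia: "\<forall>j\<in>A. j mod M = n mod M \<longrightarrow> j = n"
  proof (intro ballI impI)
    fix j assume "j \<in> A" "j mod M = n mod M"
    then show "j = n" using modinjII[OF assms(1), of j n] nI by auto
  qed
  have ib: "\<forall>j\<in>B. (j + int kg) mod M = (n + int kg) mod M \<longrightarrow> j = n"
  proof (intro ballI impI)
    fix j assume "j \<in> B" "(j + int kg) mod M = (n + int kg) mod M"
    then have "j mod M = n mod M" by (simp add: mod_eq_dvd_iff)
    then show "j = n" using modinjII[OF assms(1), of j n] nI \<open>j \<in> B\<close> by auto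
  qed
  have cc5: "L = 2 \<or> (\<forall>j\<in>II K. \<forall>j'\<in>II K. j mod M \<noteq> (j' + int kg) mod M)"
    using assms(1) unfolding CC_def by (elim conjE)
  have pc: "L = 2 \<or> \<not> pa M A ((n + int kg) mod M)"
  proof (cases "L = 2")
    case False
    then have "\<forall>j\<in>II K. \<forall>j'\<in>II K. j mod M \<noteq> (j' + int kg) mod M" using cc5 by simp
    then show ?thesis using nI unfolding pa_def by (metis subsetD)
  qed simp
  obtain s b where x: "x = (s, b)" by (cases x) auto
  show ?thesis
    using enc_tau[OF fin] enc_taui[OF fin] enc_alpha[OF fin ia] enc_beta[OF fin ib pc]
    unfolding t x
    by (cases s; cases b) (simp_all add: LV_def astep_def inv_GG_Alpha inv_GG_Beta)
qed

lemma pa_rec: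
  assumes "CC K kg M L" "A \<subseteq> II K" "j \<in> II K"
  shows "pa M A (j mod M) \<longleftrightarrow> j \<in> A"
  using modinjII[OF assms(1), of j] assms(2,3) unfolding pa_def by (metis subsetD)

lemma pb_rec:
  assumes "CC K kg M L" "B \<subseteq> II K" "j \<in> II K"
  shows "pb kg M B ((j + int kg) mod M) \<longleftrightarrow> j \<in> B"
proof -
  have "(j + int kg) mod M = (j' + int kg) mod M \<longleftrightarrow> j mod M = j' mod M" for j'
    by (simp add: mod_eq_dvd_iff)
  then show ?thesis
    using modinjII[OF assms(1), of j] assms(2,3) unfolding pb_def by (metis subsetD)
qed

lemma enc_inj:
  assumes "CC K kg M L" "A \<subseteq> II K" "B \<subseteq> II K" "A' \<subseteq> II K" "B' \<subseteq> II K"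
    "encT kg M L (n, A, B) = encT kg M L (n', A', B')"
  shows "A = A' \<and> B = B' \<and> n mod M = n' mod M"
proof -
  have lv: "lampv kg M L A B = lampv kg M L A' B'" using assms(6) by (simp add: encT_def)
  have one: "1 mod L \<noteq> 0" using assms(1) by (simp add: CC_def)
  have eqs: "pa M A x = pa M A' x \<and> pb kg M B x = pb kg M B' x" if "x mod M = x" for x
  proof -
    have "lampv kg M L A B x = lampv kg M L A' B' x" using lv by simp
    then show ?thesis using that one unfolding lampv_def by (simp split: if_splits)
  qed
  have "A = A'"
  proof (rule set_eqI)
    fix j show "j \<in> A \<longleftrightarrow> j \<in> A'"
    proof (cases "j \<in> II K")
      case True
      then show ?thesis using eqs[of "j mod M"] pa_rec[OF assms(1) assms(2) True]
          pa_rec[OF assms(1) assms(4) True] by simp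
    next
      case False then show ?thesis using assms(2,4) by blast
    qed
  qed
  moreover have "B = B'"
  proof (rule set_eqI)
    fix j show "j \<in> B \<longleftrightarrow> j \<in> B'"
    proof (cases "j \<in> II K")
      case True
      then show ?thesis using eqs[of "(j + int kg) mod M"] pb_rec[OF assms(1) assms(3) True]
          pb_rec[OF assms(1) assms(5) True] by simp
    next
      case False then show ?thesis using assms(3,5) by blast
    qed
  qed
  moreover have "n mod M = n' mod M" using assms(6) by (simp add: encT_def)
  ultimately show ?thesis by simp
qed

lemma enc_eq_iff:
  assumes "CC K kg M L" "validT K t" "fst (snd t') \<subseteq> II K" "snd (snd t') \<subseteq> II K"
    "2 * \<bar>fst t'\<bar> \<le> int K + 1"
  shows "encT kg M L t = encT kg M L t' \<longleftrightarrow> t = t'"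
proof
  assume e: "encT kg M L t = encT kg M L t'"
  obtain n A B where t: "t = (n, A, B)" by (cases t) auto
  obtain n' A' B' where t': "t' = (n', A', B')" by (cases t') auto
  have v: "n \<in> II K" "A \<subseteq> II K" "B \<subseteq> II K" using assms(2) t by (auto simp: validT_def)
  have r: "A = A' \<and> B = B' \<and> n mod M = n' mod M"
    using enc_inj[OF assms(1) v(2,3), of A' B' n n'] assms(3,4) e t t' by simp
  have "\<bar>n\<bar> + \<bar>n'\<bar> \<le> int K" using v(1) assms(5) t' by (auto simp: II_def)
  then have "n = n'" using modinj[OF assms(1)] r by simp
  then show "t = t'" using r t t' by simp
qed simp




lemma dih_cancel:
  assumes "fst y1 mod L = fst y1" "fst y2 mod L = fst y2" "dih_mul L y1 c = dih_mul L y2 c"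
  shows "y1 = y2"
proof -
  have s: "snd y1 = snd y2" using assms(3) by (auto simp: dih_mul_def)
  then have "fst y1 mod L = fst y2 mod L" using assms(3)
    by (auto simp: dih_mul_def mod_eq_dvd_iff)
  then show ?thesis using assms(1,2) s by (simp add: prod_eq_iff)
qed

lemma cancel_point:
  assumes "z1 \<in> wr_carrier M L" "z2 \<in> wr_carrier M L" "q mod M = q"
    "wr_mul M L z1 (0, (\<lambda>x. dih_one)(q := c)) = wr_mul M L z2 (0, (\<lambda>x. dih_one)(q := c))"
  shows "z1 = z2"
proof -
  note e = assms(4)[unfolded mul_point[OF assms(1,3)] mul_point[OF assms(2,3)]]
  have f: "fst z1 = fst z2" using e by simp
  define p where "p = (fst z1 + q) mod M"
  have e2: "(snd z1)(p := dih_mul L (snd z1 p) c) = (snd z2)(p := dih_mul L (snd z2 p) c)"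
    using e f unfolding p_def by simp
  have "snd z1 x = snd z2 x" for x
  proof (cases "x = p")
    case True
    have "dih_mul L (snd z1 p) c = dih_mul L (snd z2 p) c" using fun_cong[OF e2, of p] by simp
    then show ?thesis using True dih_cancel carrierD(2)[OF assms(1)] carrierD(2)[OF assms(2)] by blast
  next
    case False
    then show ?thesis using fun_cong[OF e2, of x] by simp
  qed
  then show ?thesis using f by (simp add: prod_eq_iff ext)
qed

lemma cancel_GG:
  assumes "z1 \<in> wr_carrier M L" "z2 \<in> wr_carrier M L"
    "wr_mul M L z1 (GG kg M L s) = wr_mul M L z2 (GG kg M L s)"
  shows "z1 = z2"
proof (cases s)
  case Tau
  have "fst z1 mod M = fst z2 mod M" "snd z1 = snd z2"
    using assms(3) mul_tau[OF assms(1)] mul_tau[OF assms(2)] Tau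
    by (auto simp: GG_def mod_eq_dvd_iff)
  then show ?thesis using carrierD(1)[OF assms(1)] carrierD(1)[OF assms(2)] by (simp add: prod_eq_iff)
next
  case Alpha
  then show ?thesis using cancel_point[OF assms(1,2), of 0 dih_a] assms(3) by (simp add: GG_def)
next
  case Beta
  then show ?thesis using cancel_point[OF assms(1,2), of "int kg mod M" "dih_b L"] assms(3) by (simp add: GG_def)
qed

definition EE :: "nat \<Rightarrow> (st \<times> st) set" where
  "EE K = {(t, t'). validT K t \<and> validT K t' \<and> (\<exists>s. t' = astep (s, False) t \<or> t = astep (s, False) t')}"

definition t0 :: st where "t0 = (0, {}, {})"

definition RR :: "nat \<Rightarrow> st set" where
  "RR K = {t. validT K t \<and> (t0, t) \<in> (EE K)\<^sup>*}"

lemma enc_t0: "encT kg M L t0 = wr_one"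
  by (auto simp: encT_def t0_def wr_one_def lampv_def pa_def pb_def dih_one_def intro!: ext)

lemma valid_fin: "validT K t \<Longrightarrow> finite (fst (snd t)) \<and> finite (snd (snd t))"
  using finite_II by (auto simp: validT_def intro: finite_subset)

lemma enc_band:
  assumes "CC K kg (emod m) (emod l)" "finite A" "finite B" "2 * \<bar>n\<bar> \<le> int K + 1"
  shows "encT kg (emod m) (emod l) (n, A, B) \<in> band K l m \<longleftrightarrow> 2 * \<bar>n\<bar> < int K"
proof -
  have "zabs (emod m) (n mod emod m) = \<bar>n\<bar>" using assms(1,4) unfolding CC_def by blast
  then show ?thesis using enc_carrier[OF assms(2,3)]
    by (simp add: band_def Gamma_carrier_def encT_def)
qed

lemma valid_band:
  assumes "CC K kg (emod m) (emod l)" "validT K t"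
  shows "encT kg (emod m) (emod l) t \<in> band K l m"
proof -
  obtain n A B where t: "t = (n, A, B)" by (cases t) auto
  show ?thesis using enc_band[OF assms(1), of A B n] valid_fin[OF assms(2)] assms(2) t
    by (auto simp: validT_def II_def)
qed

lemma astep_props:
  assumes "validT K t"
  shows "fst (snd (astep x t)) \<subseteq> II K" "snd (snd (astep x t)) \<subseteq> II K"
    "2 * \<bar>fst (astep x t)\<bar> \<le> int K + 1" "fst (astep x t) = fst t + (if fst x = Tau then (if snd x then -1 else 1) else 0)"
  using assms by (auto simp: validT_def astep_def flip_def II_def abs_if split: gen.splits if_splits)

lemma gm: "Gamma_mul l m u (Gamma_gen kg l m s) = wr_mul (emod m) (emod l) u (LV kg (emod m) (emod l) (s, False))"
  by (simp add: Gamma_mul_def Gamma_gen_GG LV_def)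




lemma step_edge:
  assumes "CC K kg (emod m) (emod l)" "validT K t" "validT K t'" "t' = astep (s, False) t"
  shows "(encT kg (emod m) (emod l) t, encT kg (emod m) (emod l) t') \<in> band_adj K kg l m"
proof -
  have "encT kg (emod m) (emod l) t' = Gamma_mul l m (encT kg (emod m) (emod l) t) (Gamma_gen kg l m s)"
    using LET[OF assms(1,2), of "(s, False)"] assms(4) by (simp add: gm)
  then show ?thesis using valid_band[OF assms(1)] assms(2,3) unfolding band_adj_def by blast
qed

lemma comp_sup:
  assumes "CC K kg (emod m) (emod l)" "t \<in> RR K"
  shows "encT kg (emod m) (emod l) t \<in> ident_comp K kg l m"
proof -
  let ?e = "encT kg (emod m) (emod l)"
  have "(t0, t) \<in> (EE K)\<^sup>*" using assms(2) by (simp add: RR_def)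
  then have "(wr_one, ?e t) \<in> (band_adj K kg l m)\<^sup>*"
  proof (induction rule: rtrancl_induct)
    case base
    then show ?case by (simp add: enc_t0)
  next
    case (step y z)
    have yz: "validT K y" "validT K z" "\<exists>s. z = astep (s, False) y \<or> y = astep (s, False) z"
      using step.hyps(2) by (auto simp: EE_def)
    then obtain s where "z = astep (s, False) y \<or> y = astep (s, False) z" by blast
    then have "(?e y, ?e z) \<in> band_adj K kg l m"
    proof
      assume "z = astep (s, False) y"
      then show ?thesis using step_edge[OF assms(1) yz(1,2)] by blast
    next
      assume "y = astep (s, False) z"
      then have "(?e z, ?e y) \<in> band_adj K kg l m" using step_edge[OF assms(1) yz(2,1)] by blast
      then show ?thesis unfolding band_adj_def by auto
    qed
    then show ?case using step.IH by (meson rtrancl_into_rtrancl)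
  qed
  then show ?thesis using valid_band[OF assms(1)] assms(2) by (simp add: ident_comp_def RR_def)
qed

lemma RR_step:
  assumes "t \<in> RR K" "validT K u" "(t, u) \<in> EE K"
  shows "u \<in> RR K"
  using assms by (auto simp: RR_def intro: rtrancl_into_rtrancl)

lemma comp_sub:
  assumes cc: "CC K kg (emod m) (emod l)" and h: "h \<in> ident_comp K kg l m"
  shows "h \<in> encT kg (emod m) (emod l) ` RR K"
proof -
  let ?M = "emod m" and ?L = "emod l"
  let ?e = "encT kg ?M ?L"
  have M0: "?M \<ge> 0" using cc by (simp add: CC_def)
  have "(wr_one, h) \<in> (band_adj K kg l m)\<^sup>*" using h by (simp add: ident_comp_def)
  then have "h \<in> band K l m \<longrightarrow> h \<in> ?e ` RR K"
  proof (induction rule: rtrancl_induct)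
    case base
    show ?case
    proof
      assume "wr_one \<in> band K l m"
      then have "0 < int K" using M0 by (auto simp: band_def wr_one_def zabs_def split: if_splits)
      then have "t0 \<in> RR K" by (simp add: RR_def t0_def validT_def II_def)
      then show "wr_one \<in> ?e ` RR K" by (metis enc_t0 image_eqI)
    qed
  next
    case (step y z)
    have yb: "y \<in> band K l m" "z \<in> band K l m"
      and ex: "\<exists>s. z = Gamma_mul l m y (Gamma_gen kg l m s) \<or> y = Gamma_mul l m z (Gamma_gen kg l m s)"
      using step.hyps(2) by (auto simp: band_adj_def)
    obtain t where t: "t \<in> RR K" "y = ?e t" using step.IH yb(1) by blast
    have vt: "validT K t" using t(1) by (simp add: RR_def)
    obtain s where "z = Gamma_mul l m y (Gamma_gen kg l m s) \<or> y = Gamma_mul l m z (Gamma_gen kg l m s)"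
      using ex by blast
    then have "z \<in> ?e ` RR K"
    proof
      assume zy: "z = Gamma_mul l m y (Gamma_gen kg l m s)"
      let ?u = "astep (s, False) t"
      have ze: "z = ?e ?u" using zy t(2) LET[OF cc vt, of "(s, False)"] by (simp add: gm)
      obtain n A B where u: "?u = (n, A, B)" by (cases ?u) auto
      have p: "A \<subseteq> II K" "B \<subseteq> II K" "2 * \<bar>n\<bar> \<le> int K + 1"
        using astep_props[OF vt, of "(s, False)"] u by auto
      have fin: "finite A" "finite B" using p finite_II by (auto intro: finite_subset)
      have "2 * \<bar>n\<bar> < int K" using enc_band[OF cc fin p(3)] yb(2) ze u by simp
      then have vu: "validT K ?u" using p u by (simp add: validT_def II_def)
      have "(t, ?u) \<in> EE K" using vt vu by (auto simp: EE_def)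
      then have "?u \<in> RR K" using RR_step[OF t(1) vu] by blast
      then show ?thesis using ze by blast
    next
      assume yz: "y = Gamma_mul l m z (Gamma_gen kg l m s)"
      obtain n A B where tt: "t = (n, A, B)" by (cases t) auto
      define u where "u = (if s = Tau then (n - 1, A, B) else astep (s, False) t)"
      have AB: "A \<subseteq> II K" "B \<subseteq> II K" "n \<in> II K" using vt tt by (auto simp: validT_def)
      have fin: "finite A" "finite B" using AB finite_II by (auto intro: finite_subset)
      have up: "fst (snd u) \<subseteq> II K" "snd (snd u) \<subseteq> II K" "2 * \<bar>fst u\<bar> \<le> int K + 1"
        "fst u = n - (if s = Tau then 1 else 0)"
        using astep_props[OF vt, of "(s, False)"] AB tt
        by (auto simp: u_def II_def abs_if split: if_splits)
      have bk: "astep (s, False) u = t"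
        using tt by (cases s) (auto simp: u_def astep_def)
      have fu: "finite (fst (snd u))" "finite (snd (snd u))" using up finite_II by (auto intro: finite_subset)
      have ue: "wr_mul ?M ?L (?e u) (GG kg ?M ?L s) = ?e t"
      proof (cases "s = Tau")
        case True
        then show ?thesis using enc_tau[OF fin, of ?M ?L kg "n - 1"] tt by (simp add: u_def)
      next
        case False
        have vu: "validT K u" using up AB tt False by (simp add: validT_def II_def)
        show ?thesis using LET[OF cc vu, of "(s, False)"] bk by (simp add: LV_def)
      qed
      have zc: "z \<in> wr_carrier ?M ?L" using yb(2) by (simp add: band_def Gamma_carrier_def)
      obtain n' A' B' where u': "u = (n', A', B')" by (cases u) auto
      have ec: "?e u \<in> wr_carrier ?M ?L" using enc_carrier fu u' by simp
      have "wr_mul ?M ?L z (GG kg ?M ?L s) = wr_mul ?M ?L (?e u) (GG kg ?M ?L s)"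
        using yz t(2) ue by (simp add: Gamma_mul_def Gamma_gen_GG)
      then have zu: "z = ?e u" using cancel_GG[OF zc ec] by blast
      have "2 * \<bar>n'\<bar> < int K" using enc_band[OF cc, of A' B' n'] fu up u' yb(2) zu by simp
      then have vu: "validT K u" using up u' by (simp add: validT_def II_def)
      have "(t, u) \<in> EE K" using vt vu bk by (auto simp: EE_def)
      then have "u \<in> RR K" using RR_step[OF t(1) vu] by blast
      then show ?thesis using zu by blast
    qed
    then show ?case by blast
  qed
  then show ?thesis using h by (simp add: ident_comp_def)
qed

lemma comp_eq:
  assumes "CC K kg (emod m) (emod l)"
  shows "ident_comp K kg l m = encT kg (emod m) (emod l) ` RR K"
  using comp_sub[OF assms] comp_sup[OF assms] by blast

lemma RR_valid: "t \<in> RR K \<Longrightarrow> validT K t"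
  by (simp add: RR_def)

lemma enc_inj_RR:
  assumes "CC K kg M L"
  shows "inj_on (encT kg M L) (RR K)"
proof (rule inj_onI)
  fix t t' assume "t \<in> RR K" "t' \<in> RR K" "encT kg M L t = encT kg M L t'"
  then show "t = t'" using enc_eq_iff[OF assms, of t t'] RR_valid[of t K] RR_valid[of t' K]
    by (auto simp: validT_def II_def)
qed

lemma edge_iff:
  assumes "CC K kg (emod m) (emod l)" "t \<in> RR K" "t' \<in> RR K"
  shows "encT kg (emod m) (emod l) t' = Gamma_mul l m (encT kg (emod m) (emod l) t) (Gamma_gen kg l m s)
     \<longleftrightarrow> t' = astep (s, False) t"
proof -
  have vt: "validT K t" "validT K t'" using assms(2,3) RR_valid by auto
  have "Gamma_mul l m (encT kg (emod m) (emod l) t) (Gamma_gen kg l m s) = encT kg (emod m) (emod l) (astep (s, False) t)"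
    using LET[OF assms(1) vt(1)] by (simp add: gm)
  then show ?thesis using enc_eq_iff[OF assms(1) vt(2), of "astep (s, False) t"]
      astep_props[OF vt(1), of "(s, False)"] by auto
qed




definition arun :: "st \<Rightarrow> (gen \<times> bool) list \<Rightarrow> st" where
  "arun t w = foldl (\<lambda>t x. astep x t) t w"

definition dl :: "gen \<times> bool \<Rightarrow> int" where
  "dl x = (if fst x = Tau then (if snd x then -1 else 1) else 0)"

definition disp :: "(gen \<times> bool) list \<Rightarrow> int" where
  "disp w = sum_list (map dl w)"

lemma gw: "Gamma_word kg l m w = foldl (\<lambda>g x. wr_mul (emod m) (emod l) g (LV kg (emod m) (emod l) x)) wr_one w"
  unfolding Gamma_word_def Gamma_mul_def Gamma_inv_def Gamma_gen_GG LV_def ..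

lemma fst_LV: "fst (LV kg M L x) = dl x mod M"
  by (cases x; cases "fst x") (auto simp: LV_def GG_def dl_def wr_inv_def mod_minus_eq)

lemma fst_fold:
  assumes "fst z mod M = fst z"
  shows "fst (foldl (\<lambda>g x. wr_mul M L g (LV kg M L x)) z w) = (fst z + disp w) mod M"
  using assms
proof (induction w arbitrary: z)
  case Nil then show ?case by (simp add: disp_def)
next
  case (Cons x w)
  let ?z = "wr_mul M L z (LV kg M L x)"
  have f: "fst ?z = (fst z + dl x) mod M" by (simp add: wr_mul_def fst_LV mod_add_right_eq)
  have "fst (foldl (\<lambda>g x. wr_mul M L g (LV kg M L x)) ?z w) = (fst ?z + disp w) mod M"
    using Cons.IH[of ?z] f by simp
  also have "\<dots> = (fst z + disp (x # w)) mod M" using f by (simp add: disp_def mod_add_left_eq add.assoc)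
  finally show ?case by simp
qed

lemma fst_astep: "fst (astep x t) = fst t + dl x"
  by (cases "fst x") (auto simp: astep_def dl_def)

lemma fst_arun: "fst (arun t w) = fst t + disp w"
  by (induction w arbitrary: t) (auto simp: arun_def disp_def fst_astep)

lemma sets_astep: "fst t \<in> II K \<Longrightarrow> fst (snd t) \<subseteq> II K \<Longrightarrow> snd (snd t) \<subseteq> II K \<Longrightarrow>
   fst (snd (astep x t)) \<subseteq> II K \<and> snd (snd (astep x t)) \<subseteq> II K"
  by (cases "fst x") (auto simp: astep_def flip_def)

lemma SIM:
  assumes "CC K kg M L"
  shows "fst (snd t) \<subseteq> II K \<Longrightarrow> snd (snd t) \<subseteq> II K \<Longrightarrow> (\<forall>i<length w. fst (arun t (take i w)) \<in> II K) \<Longrightarrow>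
    foldl (\<lambda>g x. wr_mul M L g (LV kg M L x)) (encT kg M L t) w = encT kg M L (arun t w)
    \<and> fst (snd (arun t w)) \<subseteq> II K \<and> snd (snd (arun t w)) \<subseteq> II K"
proof (induction w arbitrary: t)
  case Nil then show ?case by (simp add: arun_def)
next
  case (Cons x w)
  have n: "fst t \<in> II K" using Cons.prems(3) by (auto simp: arun_def)
  have v: "validT K t" using n Cons.prems(1,2) by (simp add: validT_def)
  have s: "fst (snd (astep x t)) \<subseteq> II K" "snd (snd (astep x t)) \<subseteq> II K"
    using sets_astep[OF n Cons.prems(1,2)] by auto
  have p: "\<forall>i<length w. fst (arun (astep x t) (take i w)) \<in> II K"
  proof (intro allI impI)
    fix i assume "i < length w"
    then have "fst (arun t (take (Suc i) (x # w))) \<in> II K" using Cons.prems(3) by (metis Suc_mono length_Cons)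
    then show "fst (arun (astep x t) (take i w)) \<in> II K" by (simp add: arun_def)
  qed
  have "foldl (\<lambda>g x. wr_mul M L g (LV kg M L x)) (encT kg M L t) (x # w)
     = foldl (\<lambda>g x. wr_mul M L g (LV kg M L x)) (encT kg M L (astep x t)) w"
    using LET[OF assms v] by simp
  then show ?case using Cons.IH[OF s p] by (simp add: arun_def)
qed

lemma disp_le: "\<bar>disp w\<bar> \<le> int (length w)"
  by (induction w) (auto simp: disp_def dl_def)

lemma prefix_small:
  assumes "disp w = 0" "int (length w) \<le> int K - 1" "i < length w"
  shows "2 * \<bar>disp (take i w)\<bar> < int K"
proof -
  have "disp (take i w) + disp (drop i w) = 0"
    using assms(1) by (metis append_take_drop_id disp_def map_append sum_list_append)
  moreover have "\<bar>disp (take i w)\<bar> \<le> int i" using disp_le[of "take i w"] assms(3) by simp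
  moreover have "\<bar>disp (drop i w)\<bar> \<le> int (length w) - int i" using disp_le[of "drop i w"] assms(3) by simp
  ultimately show ?thesis using assms(2) by linarith
qed

lemma part2:
  assumes cc: "CC K kg (emod m) (emod l)" and len: "int (length w) \<le> int K - 1"
  shows "Gamma_word kg l m w = wr_one \<longleftrightarrow> arun t0 w = t0"
proof -
  let ?M = "emod m" and ?L = "emod l"
  have M0: "?M \<ge> 0" using cc by (simp add: CC_def)
  have fa: "fst (arun t0 w) = disp w" by (simp add: fst_arun t0_def)
  show ?thesis
  proof (cases "disp w = 0")
    case False
    have "fst (Gamma_word kg l m w) = disp w mod ?M"
      unfolding gw using fst_fold[of wr_one ?M ?L kg w] by (simp add: wr_one_def)
    moreover have "disp w mod ?M \<noteq> 0"
    proof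
      assume "disp w mod ?M = 0"
      then have "disp w mod ?M = 0 mod ?M" by simp
      moreover have "\<bar>disp w\<bar> + \<bar>0\<bar> \<le> int K" using disp_le[of w] len by simp
      ultimately show False using modinj[OF cc] False by blast
    qed
    ultimately have "Gamma_word kg l m w \<noteq> wr_one" by (auto simp: wr_one_def)
    moreover have "arun t0 w \<noteq> t0" using fa False by (auto simp: t0_def)
    ultimately show ?thesis by simp
  next
    case True
    have pre: "\<forall>i<length w. fst (arun t0 (take i w)) \<in> II K"
    proof (intro allI impI)
      fix i assume "i < length w"
      then show "fst (arun t0 (take i w)) \<in> II K"
        using prefix_small[OF True len] by (simp add: fst_arun t0_def II_def)
    qed
    have S: "Gamma_word kg l m w = encT kg ?M ?L (arun t0 w)"
      "fst (snd (arun t0 w)) \<subseteq> II K" "snd (snd (arun t0 w)) \<subseteq> II K"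
      using SIM[OF cc, of t0 w] pre enc_t0[of kg ?M ?L] unfolding gw by (auto simp: t0_def)
    have K0: "0 < int K" using len by simp
    have v0: "validT K t0" using K0 by (simp add: validT_def t0_def II_def)
    show ?thesis
      using enc_eq_iff[OF cc v0, of "arun t0 w"] S fa True enc_t0[of kg ?M ?L]
      by (auto simp: t0_def)
  qed
qed




lemma small_dvd:
  fixes d M :: int
  assumes "M dvd d" "\<bar>d\<bar> < M"
  shows "d = 0"
proof (rule ccontr)
  assume "d \<noteq> 0"
  then have "\<bar>M\<bar> \<le> \<bar>d\<bar>" using dvd_imp_le_int assms(1) by blast
  then show False using assms(2) by linarith
qed

lemma CC1:
  assumes "l \<ge> 2" "m \<ge> 1" "2 * enat k < m"
  shows "CC k k (emod m) (emod l)"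
proof -
  have L1: "1 mod emod l \<noteq> 0"
  proof (cases l)
    case (enat l')
    then have "l' \<ge> 2" using assms(1) by (simp add: numeral_eq_enat)
    then show ?thesis using enat by (simp add: emod_def)
  qed (simp add: emod_def)
  show ?thesis
  proof (cases m)
    case (enat m')
    have mk: "2 * int k < int m'" using assms(3) enat by (simp add: numeral_eq_enat)
    have Me: "emod m = int m'" using enat by (simp add: emod_def)
    define M where "M = int m'"
    have Mk: "2 * int k < M" using mk M_def by simp
    have a: "\<forall>d. \<bar>d\<bar> \<le> int k \<longrightarrow> d mod M = 0 \<longrightarrow> d = 0"
    proof (intro allI impI)
      fix d :: int assume "\<bar>d\<bar> \<le> int k" "d mod M = 0"
      moreover have "M dvd d" using \<open>d mod M = 0\<close> by (simp add: dvd_eq_mod_eq_0)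
      moreover have "\<bar>d\<bar> < M" using \<open>\<bar>d\<bar> \<le> int k\<close> Mk by linarith
      ultimately show "d = 0" using small_dvd by blast
    qed
    have b: "\<forall>n. 2 * \<bar>n\<bar> \<le> int k + 1 \<longrightarrow> zabs M (n mod M) = \<bar>n\<bar>"
    proof (intro allI impI)
      fix n :: int assume n: "2 * \<bar>n\<bar> \<le> int k + 1"
      have Mp: "M > 0" "2 * \<bar>n\<bar> \<le> M" using Mk n by linarith+
      show "zabs M (n mod M) = \<bar>n\<bar>"
      proof (cases "n \<ge> 0")
        case True
        then have "n mod M = n" using Mp by simp
        then show ?thesis using Mp True by (simp add: zabs_def)
      next
        case False
        have "(n + M) mod M = n + M" using Mp False by (intro mod_pos_pos_trivial) auto
        then have "n mod M = n + M" by simp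
        then show ?thesis using Mp False by (simp add: zabs_def)
      qed
    qed
    have d: "\<forall>j\<in>II k. \<forall>j'\<in>II k. j mod M \<noteq> (j' + int k) mod M"
    proof (intro ballI notI)
      fix j j' assume jj: "j \<in> II k" "j' \<in> II k" "j mod M = (j' + int k) mod M"
      then have "M dvd (j - (j' + int k))" by (simp only: mod_eq_dvd_iff)
      then have "M dvd (j - j' - int k)" by (simp add: algebra_simps)
      moreover have b: "- int k < 2 * j" "2 * j < int k" "- int k < 2 * j'" "2 * j' < int k"
        using jj(1,2) by (auto simp: II_def abs_less_iff)
      moreover have "\<bar>j - j' - int k\<bar> < M" "j - j' - int k \<noteq> 0"
        using b Mk by (simp_all add: abs_less_iff)
      ultimately show False using small_dvd by blast
    qed
    show ?thesis using a b d L1 Me unfolding CC_def M_def by simp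
  next
    case infinity
    have Me: "emod m = 0" using infinity by (simp add: emod_def)
    have d: "\<forall>j\<in>II k. \<forall>j'\<in>II k. j \<noteq> j' + int k" by (auto simp: II_def)
    show ?thesis using L1 Me d unfolding CC_def by (simp add: zabs_def)
  qed
qed

lemma CC2: "CC k 0 (emod \<infinity>) (emod 2)"
proof -
  have "emod 2 = 2" by (simp add: emod_def numeral_eq_enat)
  moreover have "emod \<infinity> = 0" by (simp add: emod_def)
  ultimately show ?thesis unfolding CC_def by (simp add: zabs_def)
qed




theorem lemma2p2:
  fixes k :: nat and l m :: enat
  assumes "l \<ge> 2" and "m \<ge> 1" and "2 * enat k < m"
  shows "(\<exists>\<phi>. bij_betw \<phi> (ident_comp k k l m) (ident_comp k 0 2 \<infinity>)
            \<and> \<phi> wr_one = wr_one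
            \<and> (\<forall>u \<in> ident_comp k k l m. \<forall>v \<in> ident_comp k k l m. \<forall>s.
                 v = Gamma_mul l m u (Gamma_gen k l m s)
                 \<longleftrightarrow> \<phi> v = Gamma_mul 2 \<infinity> (\<phi> u) (Gamma_gen 0 2 \<infinity> s)))
       \<and> (\<forall>w :: (gen \<times> bool) list. int (length w) \<le> int k - 1 \<longrightarrow>
            (Gamma_word k l m w = wr_one \<longleftrightarrow> Gamma_word 0 2 \<infinity> w = wr_one))"
proof
  have c1: "CC k k (emod m) (emod l)" using CC1[OF assms] .
  have c2: "CC k 0 (emod \<infinity>) (emod 2)" using CC2 .
  let ?e1 = "encT k (emod m) (emod l)" and ?e2 = "encT 0 (emod \<infinity>) (emod 2)"
  let ?R = "RR k"
  have C1: "ident_comp k k l m = ?e1 ` ?R" using comp_eq[OF c1] .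
  have C2: "ident_comp k 0 2 \<infinity> = ?e2 ` ?R" using comp_eq[OF c2] .
  have i1: "inj_on ?e1 ?R" using enc_inj_RR[OF c1] .
  have i2: "inj_on ?e2 ?R" using enc_inj_RR[OF c2] .
  define \<phi> where "\<phi> u = (if u \<in> ?e1 ` ?R then ?e2 (the_inv_into ?R ?e1 u) else wr_one)" for u
  have phi_e: "\<phi> (?e1 t) = ?e2 t" if "t \<in> ?R" for t
    using that i1 by (simp add: \<phi>_def the_inv_into_f_f)
  have bij: "bij_betw \<phi> (?e1 ` ?R) (?e2 ` ?R)"
  proof -
    have "bij_betw (?e2 \<circ> the_inv_into ?R ?e1) (?e1 ` ?R) (?e2 ` ?R)"
      by (rule bij_betw_trans[OF bij_betw_the_inv_into[OF inj_on_imp_bij_betw[OF i1]] inj_on_imp_bij_betw[OF i2]])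
    then show ?thesis by (rule bij_betw_cong[THEN iffD1, rotated]) (simp add: \<phi>_def)
  qed
  have one: "\<phi> wr_one = wr_one"
  proof (cases "wr_one \<in> ?e1 ` ?R")
    case True
    then obtain t where t: "t \<in> ?R" "wr_one = ?e1 t" by blast
    have vt: "validT k t" using t(1) RR_valid by blast
    have "?e1 t = ?e1 t0" using t(2) enc_t0 by metis
    then have "t = t0" using enc_eq_iff[OF c1 vt, of t0] by (simp add: t0_def)
    then show ?thesis using phi_e[OF t(1)] t(2) enc_t0 by metis
  next
    case False then show ?thesis by (simp add: \<phi>_def)
  qed
  have edges: "\<forall>u \<in> ident_comp k k l m. \<forall>v \<in> ident_comp k k l m. \<forall>s.
                 v = Gamma_mul l m u (Gamma_gen k l m s)
                 \<longleftrightarrow> \<phi> v = Gamma_mul 2 \<infinity> (\<phi> u) (Gamma_gen 0 2 \<infinity> s)"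
  proof (intro ballI allI)
    fix u v s assume "u \<in> ident_comp k k l m" "v \<in> ident_comp k k l m"
    then obtain t t' where t: "t \<in> ?R" "u = ?e1 t" "t' \<in> ?R" "v = ?e1 t'" using C1 by blast
    show "v = Gamma_mul l m u (Gamma_gen k l m s) \<longleftrightarrow> \<phi> v = Gamma_mul 2 \<infinity> (\<phi> u) (Gamma_gen 0 2 \<infinity> s)"
      using edge_iff[OF c1 t(1) t(3), of s] edge_iff[OF c2 t(1) t(3), of s] t phi_e by simp
  qed
  show "\<exists>\<phi>. bij_betw \<phi> (ident_comp k k l m) (ident_comp k 0 2 \<infinity>)
            \<and> \<phi> wr_one = wr_one
            \<and> (\<forall>u \<in> ident_comp k k l m. \<forall>v \<in> ident_comp k k l m. \<forall>s.
                 v = Gamma_mul l m u (Gamma_gen k l m s)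
                 \<longleftrightarrow> \<phi> v = Gamma_mul 2 \<infinity> (\<phi> u) (Gamma_gen 0 2 \<infinity> s))"
    using bij one edges C1 C2 by metis
  show "\<forall>w :: (gen \<times> bool) list. int (length w) \<le> int k - 1 \<longrightarrow>
            (Gamma_word k l m w = wr_one \<longleftrightarrow> Gamma_word 0 2 \<infinity> w = wr_one)"
    using part2[OF c1] part2[OF c2] by blast
qed


end
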